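(* Let $E$ be an exact Courant algebroid over $M$ with a generalized Riemannian metric $g_\tau$, and identify $T^*M$ with $\rho^*(T^*M)\subset E$. For real maximally isotropic subbundles $D,D'\subset E$ let $S,S'\in\Gamma(\mathrm{End}\,T^*M)$ be the unique endomorphisms such that $D_x=\{(1+\tau)\eta+(1-\tau)S\eta:\eta\in T^*_xM\}$ and $D'_x=\{(1+\tau)\eta+(1-\tau)S'\eta:\eta\in T^*_xM\}$ for all $x\in M$ (these operators are invertible). Then $D\cap D'=\{0\}$ if and only if $S^{-1}S'-1$ is nondegenerate (at every point).
   Context: A Courant algebroid is a vector bundle $E\to M$ with anchor $\rho\colon E\to TM$, bracket on $\Gamma(E)$ and nondegenerate symmetric fiber metric $(\cdot,\cdot)$ satisfying: $[\psi,f\psi']=f[\psi,\psi']+(\rho(\psi)f)\psi'$; $[\psi_1,[\psi_2,\psi_3]]=[[\psi_1,\psi_2],\psi_3]+[\psi_2,[\psi_1,\psi_3]]$; $\rho(\psi_1)(\psi_2,\psi_3)=([\psi_1,\psi_2],\psi_3)+(\psi_2,[\psi_1,\psi_3])$; $([\psi,\psi],\psi')=\tfrac12\rho(\psi')(\psi,\psi)$. With $\rho^*\colon T^*M\to E$ defined by $(\rho^*\alpha,\psi)=\langle\alpha,\rho(\psi)\rangle$, $E$ is exact if $0\to T^*M\to E\to TM\to 0$ is exact. A generalized Riemannian metric is a positive definite fiber metric $g_\tau(\psi_1,\psi_2)=(\tau\psi_1,\psi_2)$ with $\tau\in\Gamma(\mathrm{End}\,E)$, $\tau^2=1$. A subbundle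 is maximally isotropic if isotropic for $(\cdot,\cdot)$ and of maximal rank. *)

theory Defs
  imports "HOL-Analysis.Analysis"
begin

text \<open>The fibre of E at a
point is modelled by a finite-dimensional real space 'e, the fibre of TM by 'a, and the
fibre of T*M by 'a as well, with the duality pairing given by the inner product
(alpha, v) maps to alpha \<bullet> v.\<close>

definition nondeg_sym_bilinear :: "('e::euclidean_space \<Rightarrow> 'e \<Rightarrow> real) \<Rightarrow> bool" where
  "nondeg_sym_bilinear B \<longleftrightarrow>
     (\<forall>u. linear (B u)) \<and> (\<forall>u v. B u v = B v u) \<and>
     (\<forall>u. (\<forall>v. B u v = 0) \<longrightarrow> u = 0)"

definition anchor_dual ::
  "('e::euclidean_space \<Rightarrow> 'e \<Rightarrow> real) \<Rightarrow> ('e \<Rightarrow> 'a::euclidean_space) \<Rightarrow> 'a \<Rightarrow> 'e" where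
  "anchor_dual B rho alpha = (THE e. \<forall>psi. B e psi = alpha \<bullet> rho psi)"

definition isotropic :: "('e::euclidean_space \<Rightarrow> 'e \<Rightarrow> real) \<Rightarrow> 'e set \<Rightarrow> bool" where
  "isotropic B W \<longleftrightarrow> subspace W \<and> (\<forall>u\<in>W. \<forall>v\<in>W. B u v = 0)"

definition max_isotropic :: "('e::euclidean_space \<Rightarrow> 'e \<Rightarrow> real) \<Rightarrow> 'e set \<Rightarrow> bool" where
  "max_isotropic B D \<longleftrightarrow> isotropic B D \<and> (\<forall>W. isotropic B W \<longrightarrow> dim W \<le> dim D)"

definition exact_fibre ::
  "('e::euclidean_space \<Rightarrow> 'e \<Rightarrow> real) \<Rightarrow> ('e \<Rightarrow> 'a::euclidean_space) \<Rightarrow> bool" where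
  "exact_fibre B rho \<longleftrightarrow>
     inj (anchor_dual B rho) \<and> surj rho \<and>
     range (anchor_dual B rho) = {psi. rho psi = 0}"

text \<open>Generalized Riemannian metric g_tau(psi1,psi2) = (tau psi1, psi2), tau^2 = 1,
positive definite (symmetric) fibre metric.\<close>
definition gen_riem_metric ::
  "('e::euclidean_space \<Rightarrow> 'e \<Rightarrow> real) \<Rightarrow> ('e \<Rightarrow> 'e) \<Rightarrow> bool" where
  "gen_riem_metric B tau \<longleftrightarrow>
     linear tau \<and> (\<forall>psi. tau (tau psi) = psi) \<and>
     (\<forall>u v. B (tau u) v = B (tau v) u) \<and>
     (\<forall>psi. psi \<noteq> 0 \<longrightarrow> B (tau psi) psi > 0)"

end

theory Submission
  imports Defs
begin

lemma nsb_lin2: "nondeg_sym_bilinear B \<Longrightarrow> linear (B u)"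
  unfolding nondeg_sym_bilinear_def by blast
lemma nsb_sym: "nondeg_sym_bilinear B \<Longrightarrow> B u v = B v u"
  unfolding nondeg_sym_bilinear_def by blast
lemma nsb_nd: "nondeg_sym_bilinear B \<Longrightarrow> (\<And>v. B u v = 0) \<Longrightarrow> u = 0"
  unfolding nondeg_sym_bilinear_def by blast

lemma nsb_add1: "nondeg_sym_bilinear B \<Longrightarrow> B (u + w) v = B u v + B w v"
  by (metis nsb_sym nsb_lin2 linear_add)
lemma nsb_diff1: "nondeg_sym_bilinear B \<Longrightarrow> B (u - w) v = B u v - B w v"
  by (metis nsb_sym nsb_lin2 linear_diff)
lemma nsb_scale1: "nondeg_sym_bilinear B \<Longrightarrow> B (c *\<^sub>R u) v = c * B u v"
  by (metis nsb_sym nsb_lin2 linear_scale real_scaleR_def)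
lemma nsb_add2: "nondeg_sym_bilinear B \<Longrightarrow> B v (u + w) = B v u + B v w"
  by (metis nsb_lin2 linear_add)
lemma nsb_diff2: "nondeg_sym_bilinear B \<Longrightarrow> B v (u - w) = B v u - B v w"
  by (metis nsb_lin2 linear_diff)
lemma nsb_zero1: "nondeg_sym_bilinear B \<Longrightarrow> B 0 v = 0"
  by (metis nsb_sym nsb_lin2 linear_0)

lemma riesz:
  fixes B :: "'e::euclidean_space \<Rightarrow> 'e \<Rightarrow> real" and f :: "'e \<Rightarrow> real"
  assumes B: "nondeg_sym_bilinear B" and f: "linear f"
  shows "\<exists>e. \<forall>psi. B e psi = f psi"
proof -
  define P where "P e = adjoint (B e) 1" for e
  have P: "psi \<bullet> P e = B e psi" for e psi
    using adjoint_works[OF nsb_lin2[OF B], of psi e 1] by (simp add: P_def)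
  have linP: "linear P"
  proof (rule linearI)
    fix x y
    show "P (x + y) = P x + P y"
      by (rule vector_eq_ldot[THEN iffD1]) (simp add: P inner_add_right nsb_add1[OF B])
  next
    fix c x
    show "P (c *\<^sub>R x) = c *\<^sub>R P x"
      by (rule vector_eq_ldot[THEN iffD1]) (simp add: P nsb_scale1[OF B])
  qed
  have "inj P"
    unfolding linear_injective_0[OF linP]
  proof (intro allI impI)
    fix x assume "P x = 0"
    then have "B x v = 0" for v using P[of v x] by simp
    then show "x = 0" using nsb_nd[OF B] by blast
  qed
  then have "surj P" using linear_injective_imp_surjective[OF linP] by simp
  then obtain e where e: "P e = adjoint f 1" by (metis surjD)
  have "B e psi = f psi" for psi
    using P[of psi e] adjoint_works[OF f, of psi 1] e by simp
  then show ?thesis by blast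
qed

lemma anchor_dual_prop:
  fixes B :: "'e::euclidean_space \<Rightarrow> 'e \<Rightarrow> real" and rho :: "'e \<Rightarrow> 'a::euclidean_space"
  assumes B: "nondeg_sym_bilinear B" and r: "linear rho"
  shows "B (anchor_dual B rho alpha) psi = alpha \<bullet> rho psi"
proof -
  have lf: "linear (\<lambda>psi. alpha \<bullet> rho psi)"
    using r by (simp add: linear_iff inner_add_right)
  obtain e where e: "\<forall>psi. B e psi = alpha \<bullet> rho psi" using riesz[OF B lf] by blast
  have uniq: "e' = e" if "\<forall>psi. B e' psi = alpha \<bullet> rho psi" for e'
  proof -
    have "B (e' - e) v = 0" for v using that e nsb_diff1[OF B] by simp
    then show ?thesis using nsb_nd[OF B] by force
  qed
  have "anchor_dual B rho alpha = e"
    unfolding anchor_dual_def using e uniq by (rule the_equality)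
  then show ?thesis using e by simp
qed
lemma fibre:
  fixes B :: "'e::euclidean_space \<Rightarrow> 'e \<Rightarrow> real" and rho :: "'e \<Rightarrow> 'a::euclidean_space"
    and tau :: "'e \<Rightarrow> 'e" and S S' :: "'a \<Rightarrow> 'a" and D D' :: "'e set"
  assumes Bm: "nondeg_sym_bilinear B" and r: "linear rho" and ex: "exact_fibre B rho"
    and gm: "gen_riem_metric B tau" and mD: "max_isotropic B D"
    and lS: "linear S" and lS': "linear S'"
    and rD: "D = (\<lambda>eta. (anchor_dual B rho eta + tau (anchor_dual B rho eta))
             + (anchor_dual B rho (S eta) - tau (anchor_dual B rho (S eta)))) ` UNIV"
    and rD': "D' = (\<lambda>eta. (anchor_dual B rho eta + tau (anchor_dual B rho eta))
             + (anchor_dual B rho (S' eta) - tau (anchor_dual B rho (S' eta)))) ` UNIV"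
  shows "D \<inter> D' = {0} \<longleftrightarrow> bij (\<lambda>eta. inv S (S' eta) - eta)"
proof -
  define A where "A = anchor_dual B rho"
  define ph where "ph T eta = (A eta + tau (A eta)) + (A (T eta) - tau (A (T eta)))" for T eta
  have DD: "D = range (ph S)" "D' = range (ph S')" using rD rD' by (simp_all add: ph_def A_def)
  have Ap: "B (A al) psi = al \<bullet> rho psi" for al psi
    unfolding A_def by (rule anchor_dual_prop[OF Bm r])
  have injA: "inj A" and rA: "range A = {psi. rho psi = 0}"
    using ex unfolding exact_fibre_def A_def by auto
  have iso: "B (A al) (A be) = 0" for al be
  proof -
    have "rho (A be) = 0" using rA by blast
    then show ?thesis by (simp add: Ap)
  qed
  have lt: "linear tau" and ti: "\<And>p. tau (tau p) = p" and ts: "\<And>u v. B (tau u) v = B (tau v) u"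
    and tp: "\<And>p. p \<noteq> 0 \<Longrightarrow> B (tau p) p > 0"
    using gm unfolding gen_riem_metric_def by auto
  have A0: "A 0 = 0"
    by (rule nsb_nd[OF Bm]) (simp add: Ap linear_0[OF r])
  have t0: "tau 0 = 0" using linear_0[OF lt] .
  have pos0: "p = 0" if "tau p = p" "B p p = 0" for p
    using tp[of p] that by auto
  have neg0: "q = 0" if "tau q = - q" "B q q = 0" for q
  proof -
    have "B (tau q) q = - B q q" using that(1) nsb_scale1[OF Bm, of "-1" q q] by simp
    then show ?thesis using tp[of q] that by auto
  qed
  have Bexp: "B (A a - A b) (A a - A b) = 0" for a b
    by (simp add: nsb_diff1[OF Bm] nsb_diff2[OF Bm] iso)
  have kerP: "a = b" if "A a + tau (A a) = A b + tau (A b)" for a b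
  proof -
    have "tau (A a - A b) = - (A a - A b)"
      using that by (simp add: linear_diff[OF lt] algebra_simps)
    then have "A a - A b = 0" using neg0 Bexp by blast
    then show ?thesis using injA by (simp add: inj_eq)
  qed
  have kerN: "a = b" if "A a - tau (A a) = A b - tau (A b)" for a b
  proof -
    have "tau (A a - A b) = (A a - A b)"
      using that by (simp add: linear_diff[OF lt] algebra_simps)
    then have "A a - A b = 0" using pos0 Bexp by blast
    then show ?thesis using injA by (simp add: inj_eq)
  qed
  have tP: "tau (A a + tau (A a)) = A a + tau (A a)" for a
    by (simp add: linear_add[OF lt] ti)
  have tN: "tau (A a - tau (A a)) = - (A a - tau (A a))" for a
    by (simp add: linear_diff[OF lt] ti)
  have dec: "p = p' \<and> q = q'" if "p + q = p' + q'" "tau p = p" "tau p' = p'"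
     "tau q = - q" "tau q' = - q'" for p q p' q'
  proof -
    have "tau p + tau q = tau p' + tau q'" using that(1) by (metis linear_add[OF lt])
    then have e2: "p - q = p' - q'" using that(2-5) by simp
    have "(p + q) + (p - q) = (p' + q') + (p' - q')" using that(1) e2 by simp
    then have "2 *\<^sub>R p = 2 *\<^sub>R p'" by (simp add: scaleR_2)
    then have "p = p'" by simp
    then show ?thesis using that(1) by simp
  qed
  have phinj: "a = b \<and> T a = T' b" if "ph T a = ph T' b" for T T' a b
  proof -
    have "A a + tau (A a) = A b + tau (A b) \<and> A (T a) - tau (A (T a)) = A (T' b) - tau (A (T' b))"
      by (rule dec) (use that in \<open>simp_all add: ph_def tP tN\<close>)
    then show ?thesis using kerP kerN by blast
  qed
  have ph0: "ph T 0 = 0" if "linear T" for T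
    using that by (simp add: ph_def A0 t0 linear_0)
  have isoD: "B (ph S a) (ph S a) = 0" for a
    using mD DD unfolding max_isotropic_def isotropic_def by blast
  have injS: "inj S"
    unfolding linear_injective_0[OF lS]
  proof (intro allI impI)
    fix a assume Sa: "S a = 0"
    have "ph S a = A a + tau (A a)" using Sa by (simp add: ph_def A0 t0)
    then have "A a + tau (A a) = 0" using pos0[OF tP[of a]] isoD[of a] by simp
    then have "A a + tau (A a) = A 0 + tau (A 0)" by (simp add: A0 t0)
    then show "a = 0" by (rule kerP)
  qed
  have surjS: "surj S" using linear_injective_imp_surjective[OF lS injS] by simp
  have lIS: "linear (inv S)" using inj_linear_imp_inv_linear[OF lS injS] .
  define T where "T eta = inv S (S' eta) - eta" for eta
  have lT: "linear T" unfolding T_def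
    using linear_compose[OF lS' lIS] by (intro linear_compose_sub) (auto simp: o_def linear_id[unfolded id_def])
  have Tz: "T a = 0 \<longleftrightarrow> S a = S' a" for a
  proof
    assume "T a = 0" then have "inv S (S' a) = a" by (simp add: T_def)
    then show "S a = S' a" by (metis surjS surj_f_inv_f)
  next
    assume "S a = S' a" then show "T a = 0" by (metis T_def inv_f_f[OF injS] diff_self)
  qed
  have bijT: "bij T \<longleftrightarrow> (\<forall>a. S a = S' a \<longrightarrow> a = 0)"
  proof
    assume "bij T" then show "\<forall>a. S a = S' a \<longrightarrow> a = 0"
      using Tz linear_injective_0[OF lT] bij_is_inj by blast
  next
    assume "\<forall>a. S a = S' a \<longrightarrow> a = 0"
    then have "inj T" using Tz linear_injective_0[OF lT] by blast
    then show "bij T" using linear_injective_imp_surjective[OF lT] by (simp add: bij_def)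
  qed
  have main: "D \<inter> D' = {0} \<longleftrightarrow> (\<forall>a. S a = S' a \<longrightarrow> a = 0)"
  proof
    assume H: "D \<inter> D' = {0}"
    show "\<forall>a. S a = S' a \<longrightarrow> a = 0"
    proof (intro allI impI)
      fix a assume "S a = S' a"
      then have "ph S a = ph S' a" by (simp add: ph_def)
      then have "ph S a \<in> D \<inter> D'" using DD by (metis IntI rangeI)
      then have "ph S a = ph S 0" using H ph0[OF lS] by auto
      then show "a = 0" using phinj by blast
    qed
  next
    assume H: "\<forall>a. S a = S' a \<longrightarrow> a = 0"
    show "D \<inter> D' = {0}"
    proof
      show "D \<inter> D' \<subseteq> {0}"
      proof
        fix x assume "x \<in> D \<inter> D'"
        then have "x \<in> range (ph S)" "x \<in> range (ph S')" using DD by auto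
        then obtain a b where "x = ph S a" "x = ph S' b" by blast
        then have "a = b" "S a = S' b" using phinj by metis+
        then have "a = 0" using H by blast
        then show "x \<in> {0}" using \<open>x = ph S a\<close> ph0[OF lS] by simp
      qed
      show "{0} \<subseteq> D \<inter> D'" using DD ph0[OF lS] ph0[OF lS'] by (metis Int_iff empty_subsetI insert_subset rangeI)
    qed
  qed
  show ?thesis using main bijT unfolding T_def by simp
qed


theorem mainTheorem12:
  fixes M :: "'m set"
    and B :: "'m \<Rightarrow> 'e::euclidean_space \<Rightarrow> 'e \<Rightarrow> real"
    and rho :: "'m \<Rightarrow> 'e \<Rightarrow> 'a::euclidean_space"
    and tau :: "'m \<Rightarrow> 'e \<Rightarrow> 'e"
    and D D' :: "'m \<Rightarrow> 'e set"
    and S S' :: "'m \<Rightarrow> 'a \<Rightarrow> 'a"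
  assumes metric: "\<And>x. x \<in> M \<Longrightarrow> nondeg_sym_bilinear (B x)"
    and anchor: "\<And>x. x \<in> M \<Longrightarrow> linear (rho x)"
    and exact: "\<And>x. x \<in> M \<Longrightarrow> exact_fibre (B x) (rho x)"
    and genmetric: "\<And>x. x \<in> M \<Longrightarrow> gen_riem_metric (B x) (tau x)"
    and maxD: "\<And>x. x \<in> M \<Longrightarrow> max_isotropic (B x) (D x)"
    and maxD': "\<And>x. x \<in> M \<Longrightarrow> max_isotropic (B x) (D' x)"
    and linS: "\<And>x. x \<in> M \<Longrightarrow> linear (S x)"
    and linS': "\<And>x. x \<in> M \<Longrightarrow> linear (S' x)"
    and reprD: "\<And>x. x \<in> M \<Longrightarrow> D x =
        (\<lambda>eta. (anchor_dual (B x) (rho x) eta + tau x (anchor_dual (B x) (rho x) eta))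
             + (anchor_dual (B x) (rho x) (S x eta) - tau x (anchor_dual (B x) (rho x) (S x eta)))) ` UNIV"
    and reprD': "\<And>x. x \<in> M \<Longrightarrow> D' x =
        (\<lambda>eta. (anchor_dual (B x) (rho x) eta + tau x (anchor_dual (B x) (rho x) eta))
             + (anchor_dual (B x) (rho x) (S' x eta) - tau x (anchor_dual (B x) (rho x) (S' x eta)))) ` UNIV"
  shows "(\<forall>x\<in>M. D x \<inter> D' x = {0}) \<longleftrightarrow>
         (\<forall>x\<in>M. bij (\<lambda>eta. inv (S x) (S' x eta) - eta))"
  using fibre[OF metric anchor exact genmetric maxD linS linS' reprD reprD'] by blast

end
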